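(* Let $G$, $p$ and $\ell$ be as in the construction described in the context. Every acyclic matching of $G$ of size at least $\ell$ saturates $p$; consequently, every such matching contains an edge $pp_q$ for some $q\in[t]$.
   Context: Construction. Let $n=3c$ with $c\in\mathbb{N}$, $X=[n]$, and let $(X,\mathcal{S}_1),\dots,(X,\mathcal{S}_t)$ be instances of \textsc{Exact-3-Cover} (each $\mathcal{S}_i$ a collection of 3-element subsets of $X$, all $\mathcal{S}_i$ of the same size $m$ and pairwise distinct as collections). Let $\mathcal{C}=\bigcup_{i\in[t]}\mathcal{S}_i=\{s_1,\dots,s_{|\mathcal{C}|}\}$ (distinct 3-sets). The graph $G$: a vertex set $X'=\{v_a:a\in X\}$; for each $s_j=\{a,b,c\}\in\mathcal{C}$ a set gadget $Q_j$ with vertices $u_{ja},u_{jb},u_{jc}$ (interface vertices), $u_j,w_j,u_j',w_j'$, where each of $u_j,w_j$ is adjacent to each of $u_{ja},u_{jb},u_{jc}$, and additionally $u_jw_j,u_ju_j',w_jw_j'$ are edges; for each $s_j\in\mathcal{C}$ and $d\in s_j$ the edge $u_{jd}v_d$ (cross edges); a vertex $p$ and vertices $P=\{p_1,\dots,p_t\}$ with edges $pp_i$ for all $i$; and for each $i\in[t]$ and each $s_j\in\mathcal{C}\setminus\mathcal{S}_i$, edges from $p_i$ to the three interface vertices of $Q_j$. There are no other edges. Set $\ell=2|\mathcal{C}|+\frac{2n}{3}+1$. A matching $M$ saturates a vertex $v$ if $v$ is an endpoint of an edge of $M$; $M$ is acyclic if the subgraph induced by the endpoints of its edges is a forest. 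*)

theory Defs
  imports Main
begin

text \<open>Vertices of the graph G. Set gadgets Q_j are indexed directly by the
(distinct) 3-set s_j itself.\<close>
datatype vert =
    Xv nat                 \<comment> \<open>v_a, a in X\<close>
  | Iv "nat set" nat       \<comment> \<open>interface vertex u_{ja}\<close>
  | Uv "nat set"
  | Wv "nat set"
  | U'v "nat set"
  | W'v "nat set"
  | Pv
  | PIv nat

definition collC :: "nat \<Rightarrow> (nat \<Rightarrow> nat set set) \<Rightarrow> nat set set" where
  "collC t S = (\<Union>i\<in>{1..t}. S i)"

definition G_edges :: "nat \<Rightarrow> (nat \<Rightarrow> nat set set) \<Rightarrow> vert set set" where
  "G_edges t S =
     {{Iv s a, Uv s} | s a. s \<in> collC t S \<and> a \<in> s}
   \<union> {{Iv s a, Wv s} | s a. s \<in> collC t S \<and> a \<in> s}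
   \<union> {{Uv s, Wv s} | s. s \<in> collC t S}
   \<union> {{Uv s, U'v s} | s. s \<in> collC t S}
   \<union> {{Wv s, W'v s} | s. s \<in> collC t S}
   \<union> {{Iv s a, Xv a} | s a. s \<in> collC t S \<and> a \<in> s}
   \<union> {{Pv, PIv i} | i. i \<in> {1..t}}
   \<union> {{PIv i, Iv s a} | i s a. i \<in> {1..t} \<and> s \<in> collC t S - S i \<and> a \<in> s}"

definition ell :: "nat \<Rightarrow> nat \<Rightarrow> (nat \<Rightarrow> nat set set) \<Rightarrow> nat" where
  "ell c t S = 2 * card (collC t S) + 2 * (3 * c) div 3 + 1"

definition is_matching :: "'a set set \<Rightarrow> 'a set set \<Rightarrow> bool" where
  "is_matching E M \<longleftrightarrow> M \<subseteq> E \<and> (\<forall>e\<in>M. \<forall>f\<in>M. e \<noteq> f \<longrightarrow> e \<inter> f = {})"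

definition has_cycle :: "'a set set \<Rightarrow> bool" where
  "has_cycle F \<longleftrightarrow> (\<exists>vs. length vs \<ge> 3 \<and> distinct vs \<and>
      (\<forall>i<length vs. {vs ! i, vs ! ((i + 1) mod length vs)} \<in> F))"

definition induced_edges :: "'a set set \<Rightarrow> 'a set \<Rightarrow> 'a set set" where
  "induced_edges E V = {e \<in> E. e \<subseteq> V}"

definition acyclic_matching :: "'a set set \<Rightarrow> 'a set set \<Rightarrow> bool" where
  "acyclic_matching E M \<longleftrightarrow> is_matching E M \<and> \<not> has_cycle (induced_edges E (\<Union>M))"

definition saturates :: "'a set set \<Rightarrow> 'a \<Rightarrow> bool" where
  "saturates M v \<longleftrightarrow> (\<exists>e\<in>M. v \<in> e)"

end

theory Submission imports Defs begin
lemma all3: "(\<forall>i<(3::nat). P i) = (P 0 \<and> P 1 \<and> P 2)"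
proof
  assume "P 0 \<and> P 1 \<and> P 2"
  moreover have "\<And>i. i < (3::nat) \<Longrightarrow> i = 0 \<or> i = 1 \<or> i = 2" by arith
  ultimately show "\<forall>i<(3::nat). P i" by blast
qed auto
lemma all4: "(\<forall>i<(4::nat). P i) = (P 0 \<and> P 1 \<and> P 2 \<and> P 3)"
proof
  assume "P 0 \<and> P 1 \<and> P 2 \<and> P 3"
  moreover have "\<And>i. i < (4::nat) \<Longrightarrow> i = 0 \<or> i = 1 \<or> i = 2 \<or> i = 3" by arith
  ultimately show "\<forall>i<(4::nat). P i" by blast
qed auto
lemma cyc3: assumes "distinct [x,y,z]" "{x,y} \<in> F" "{y,z} \<in> F" "{z,x} \<in> F"
  shows "has_cycle F"
  unfolding has_cycle_def
proof (rule exI[where x="[x,y,z]"])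
  have l: "length [x,y,z] = 3" by simp
  show "3 \<le> length [x, y, z] \<and> distinct [x, y, z] \<and>
    (\<forall>i<length [x, y, z]. {[x, y, z] ! i, [x, y, z] ! ((i + 1) mod length [x, y, z])} \<in> F)"
    unfolding l all3 using assms by simp
qed
lemma cyc4: assumes "distinct [x,y,z,w]" "{x,y} \<in> F" "{y,z} \<in> F" "{z,w} \<in> F" "{w,x} \<in> F"
  shows "has_cycle F"
  unfolding has_cycle_def
proof (rule exI[where x="[x,y,z,w]"])
  have l: "length [x,y,z,w] = 4" by simp
  show "3 \<le> length [x, y, z, w] \<and> distinct [x, y, z, w] \<and>
    (\<forall>i<length [x, y, z, w]. {[x, y, z, w] ! i, [x, y, z, w] ! ((i + 1) mod length [x, y, z, w])} \<in> F)"
    unfolding l all4 using assms by simp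
qed
lemma edges:
  assumes "s \<in> collC t S" "a \<in> s"
  shows "{Iv s a, Uv s} \<in> G_edges t S" "{Uv s, Iv s a} \<in> G_edges t S"
    "{Iv s a, Wv s} \<in> G_edges t S" "{Wv s, Iv s a} \<in> G_edges t S"
    "{Uv s, Wv s} \<in> G_edges t S" "{Wv s, Uv s} \<in> G_edges t S"
proof -
  have 1: "{Iv s a, Uv s} \<in> G_edges t S" unfolding G_edges_def using assms
    by (intro UnI1) blast
  have 2: "{Iv s a, Wv s} \<in> G_edges t S" unfolding G_edges_def
    apply (rule UnI1, rule UnI1, rule UnI1, rule UnI1, rule UnI1, rule UnI1, rule UnI2) using assms by blast
  have 3: "{Uv s, Wv s} \<in> G_edges t S" unfolding G_edges_def
    apply (rule UnI1, rule UnI1, rule UnI1, rule UnI1, rule UnI1, rule UnI2) using assms by blast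
  from 1 2 3 show "{Iv s a, Uv s} \<in> G_edges t S" "{Uv s, Iv s a} \<in> G_edges t S"
    "{Iv s a, Wv s} \<in> G_edges t S" "{Wv s, Iv s a} \<in> G_edges t S"
    "{Uv s, Wv s} \<in> G_edges t S" "{Wv s, Uv s} \<in> G_edges t S"
    by (simp_all add: insert_commute)
qed

lemma edgeP:
  assumes "s \<in> collC t S" "a \<in> s" "i \<in> {1..t}" "s \<notin> S i"
  shows "{PIv i, Iv s a} \<in> G_edges t S" "{Iv s a, PIv i} \<in> G_edges t S"
proof -
  have 1: "{PIv i, Iv s a} \<in> G_edges t S"
    unfolding G_edges_def using assms by (intro UnI2) blast
  then show "{PIv i, Iv s a} \<in> G_edges t S" "{Iv s a, PIv i} \<in> G_edges t S"
    by (simp_all add: insert_commute)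
qed


lemma matchD: "is_matching E M \<Longrightarrow> e \<in> M \<Longrightarrow> f \<in> M \<Longrightarrow> e \<noteq> f \<Longrightarrow> e \<inter> f = {}"
  unfolding is_matching_def by blast

lemma match_card_le:
  assumes "is_matching E M" "A \<subseteq> M" "finite B" "\<forall>e\<in>A. \<exists>v\<in>B. v \<in> e"
  shows "card A \<le> card B"
proof -
  define f where "f e = (SOME v. v \<in> B \<and> v \<in> e)" for e
  have f: "f e \<in> B \<and> f e \<in> e" if "e \<in> A" for e
  proof -
    from bspec[OF assms(4) that] obtain v where "v \<in> B \<and> v \<in> e" by blast
    then show ?thesis unfolding f_def by (rule someI)
  qed
  have "inj_on f A"
  proof (rule inj_onI, rule ccontr)
    fix x y assume xy: "x \<in> A" "y \<in> A" "f x = f y" "x \<noteq> y"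
    have "x \<inter> y = {}" using matchD[OF assms(1) _ _ xy(4)] xy(1,2) assms(2) by blast
    moreover have "f x \<in> x" "f x \<in> y" using f[OF xy(1)] f[OF xy(2)] xy(3) by auto
    ultimately show False by blast
  qed
  moreover have "f ` A \<subseteq> B" using f by blast
  ultimately show ?thesis by (rule card_inj_on_le[OF _ _ assms(3)])
qed

lemma arith_aux:
  fixes u w x h :: nat
  assumes "u \<le> 1" "w \<le> 1" "h \<le> 1" "x + h \<le> 3" "u = 1 \<and> w = 1 \<longrightarrow> x + h = 0"
    "1 \<le> h \<and> (u = 1 \<or> w = 1) \<longrightarrow> x + h \<le> 1"
  shows "3 * (u + w + x + h) \<le> 6 + 2 * x"
proof -
  have u: "u = 0 \<or> u = 1" using assms(1) by arith
  have w: "w = 0 \<or> w = 1" using assms(2) by arith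
  have h: "h = 0 \<or> h = 1" using assms(3) by arith
  show ?thesis using u w h assms(4-6) by (elim disjE) simp_all
qed

locale ctx =
  fixes t :: nat and S :: "nat \<Rightarrow> nat set set" and M :: "vert set set"
  assumes match: "is_matching (G_edges t S) M"
    and nocyc: "\<not> has_cycle (induced_edges (G_edges t S) (\<Union>M))"
    and finM: "finite M"
begin

definition "EU s = {e\<in>M. Uv s \<in> e}"
definition "EW s = {e\<in>M. Wv s \<in> e}"
definition "EF s = {e\<in>M. \<exists>a\<in>s. e = {Iv s a, Xv a}}"
definition "EH s = {e\<in>M. \<exists>i a. i \<in> {1..t} \<and> s \<notin> S i \<and> a \<in> s \<and> e = {PIv i, Iv s a}}"

lemma ind: "e \<in> G_edges t S \<Longrightarrow> e \<subseteq> \<Union>M \<Longrightarrow> e \<in> induced_edges (G_edges t S) (\<Union>M)"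
  unfolding induced_edges_def by blast

lemma no_tri:
  assumes "s \<in> collC t S" "a \<in> s" "Uv s \<in> \<Union>M" "Wv s \<in> \<Union>M" "Iv s a \<in> \<Union>M"
  shows False
proof -
  note e = edges[OF assms(1,2)]
  have "has_cycle (induced_edges (G_edges t S) (\<Union>M))"
    by (rule cyc3[of "Uv s" "Iv s a" "Wv s"]) (use assms e in \<open>simp_all add: ind\<close>)
  with nocyc show False by blast
qed

lemma no_q1:
  assumes "s \<in> collC t S" "a \<in> s" "b \<in> s" "a \<noteq> b" "i \<in> {1..t}" "s \<notin> S i"
    "x = Uv s \<or> x = Wv s" "x \<in> \<Union>M" "Iv s a \<in> \<Union>M" "Iv s b \<in> \<Union>M" "PIv i \<in> \<Union>M"
  shows False
proof -
  note e = edges[OF assms(1,2)] edges[OF assms(1,3)] edgeP[OF assms(1,2,5,6)]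
    edgeP[OF assms(1,3,5,6)]
  have ex: "{Iv s a, x} \<in> G_edges t S" "{x, Iv s b} \<in> G_edges t S" using assms(7) e by auto
  have dx: "x \<noteq> PIv i" "x \<noteq> Iv s a" "x \<noteq> Iv s b" using assms(7) by auto
  have "has_cycle (induced_edges (G_edges t S) (\<Union>M))"
    by (rule cyc4[of "PIv i" "Iv s a" x "Iv s b"]) (use assms e ex dx in \<open>simp_all add: ind\<close>)
  with nocyc show False by blast
qed

lemma no_q2:
  assumes "s \<in> collC t S" "a \<in> s" "b \<in> s" "a \<noteq> b" "i \<in> {1..t}" "s \<notin> S i"
    "j \<in> {1..t}" "s \<notin> S j" "i \<noteq> j"
    "Iv s a \<in> \<Union>M" "Iv s b \<in> \<Union>M" "PIv i \<in> \<Union>M" "PIv j \<in> \<Union>M"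
  shows False
proof -
  note e = edgeP[OF assms(1,2,5,6)] edgeP[OF assms(1,3,5,6)]
    edgeP[OF assms(1,2,7,8)] edgeP[OF assms(1,3,7,8)]
  have "has_cycle (induced_edges (G_edges t S) (\<Union>M))"
    by (rule cyc4[of "PIv i" "Iv s a" "PIv j" "Iv s b"]) (use assms e in \<open>simp_all add: ind\<close>)
  with nocyc show False by blast
qed

lemma EU_le: "card (EU s) \<le> 1"
proof -
  have "card (EU s) \<le> card {Uv s}"
    by (rule match_card_le[OF match]) (auto simp: EU_def)
  then show ?thesis by simp
qed

lemma EW_le: "card (EW s) \<le> 1"
proof -
  have "card (EW s) \<le> card {Wv s}"
    by (rule match_card_le[OF match]) (auto simp: EW_def)
  then show ?thesis by simp
qed

lemma fin: "finite (EU s)" "finite (EW s)" "finite (EF s)" "finite (EH s)"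
  using finM by (auto simp: EU_def EW_def EF_def EH_def)

lemma EFH_le3: assumes "card s = 3" shows "card (EF s \<union> EH s) \<le> 3"
proof -
  have fs: "finite s" using assms by (metis card.infinite zero_neq_numeral)
  have "card (EF s \<union> EH s) \<le> card (Iv s ` s)"
    by (rule match_card_le[OF match]) (use fs in \<open>auto simp: EF_def EH_def\<close>)
  also have "\<dots> \<le> card s" by (rule card_image_le[OF fs])
  finally show ?thesis using assms by simp
qed

lemma EFH_disj: "EF s \<inter> EH s = {}"
  by (auto simp: EF_def EH_def doubleton_eq_iff)

lemma EH_le1: assumes "s \<in> collC t S" shows "card (EH s) \<le> 1"
proof -
  have "\<forall>e1\<in>EH s. \<forall>e2\<in>EH s. e1 = e2"
  proof (intro ballI, rule ccontr)
    fix e1 e2 assume e1: "e1 \<in> EH s" and e2: "e2 \<in> EH s" and ne: "e1 \<noteq> e2"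
    from e1 obtain i a where i: "i \<in> {1..t}" "s \<notin> S i" "a \<in> s" "e1 = {PIv i, Iv s a}" "e1 \<in> M"
      by (auto simp: EH_def)
    from e2 obtain j b where j: "j \<in> {1..t}" "s \<notin> S j" "b \<in> s" "e2 = {PIv j, Iv s b}" "e2 \<in> M"
      by (auto simp: EH_def)
    have d: "e1 \<inter> e2 = {}" using matchD[OF match i(5) j(5) ne] .
    have "i \<noteq> j" using d i(4) j(4) by auto
    moreover have "a \<noteq> b" using d i(4) j(4) by auto
    ultimately show False
      using no_q2[OF assms i(3) j(3) _ i(1,2) j(1,2)] i j by blast
  qed
  then show ?thesis using card_le_Suc0_iff_eq[OF fin(4)] by simp
qed

lemma both: assumes "s \<in> collC t S" "EU s \<noteq> {}" "EW s \<noteq> {}" shows "EF s \<union> EH s = {}"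
proof -
  have u: "Uv s \<in> \<Union>M" using assms(2) by (auto simp: EU_def)
  have w: "Wv s \<in> \<Union>M" using assms(3) by (auto simp: EW_def)
  have "False" if "e \<in> EF s \<union> EH s" for e
  proof -
    from that obtain a where "a \<in> s" "Iv s a \<in> e" "e \<in> M" by (auto simp: EF_def EH_def)
    then show False using no_tri[OF assms(1) _ u w, of a] by blast
  qed
  then show ?thesis by blast
qed

lemma one: assumes "s \<in> collC t S" "EH s \<noteq> {}" "EU s \<noteq> {} \<or> EW s \<noteq> {}"
  shows "card (EF s \<union> EH s) \<le> 1"
proof -
  obtain x where x: "x = Uv s \<or> x = Wv s" "x \<in> \<Union>M"
    using assms(3) by (auto simp: EU_def EW_def)
  from assms(2) obtain e0 i a0 where e0: "e0 \<in> M" "i \<in> {1..t}" "s \<notin> S i" "a0 \<in> s"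
     "e0 = {PIv i, Iv s a0}" by (auto simp: EH_def)
  have all: "e = e0" if e: "e \<in> EF s \<union> EH s" for e
  proof (rule ccontr)
    assume ne: "e \<noteq> e0"
    from e obtain b where b: "b \<in> s" "Iv s b \<in> e" "e \<in> M" by (auto simp: EF_def EH_def)
    have d: "e \<inter> e0 = {}" using matchD[OF match b(3) e0(1) ne] .
    have "a0 \<noteq> b" using d b(2) e0(5) by auto
    moreover have "Iv s a0 \<in> \<Union>M" "PIv i \<in> \<Union>M" using e0 by auto
    moreover have "Iv s b \<in> \<Union>M" using b by auto
    ultimately show False using no_q1[OF assms(1) e0(4) b(1) _ e0(2,3) x] by blast
  qed
  have "finite (EF s \<union> EH s)" using fin by simp
  then show ?thesis using card_le_Suc0_iff_eq all by (metis One_nat_def)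
qed

lemma gadget: assumes "s \<in> collC t S" "card s = 3"
  shows "3 * (card (EU s) + card (EW s) + card (EF s) + card (EH s)) \<le> 6 + 2 * card (EF s)"
proof -
  have cu: "card (EF s \<union> EH s) = card (EF s) + card (EH s)"
    using card_Un_disjoint[OF fin(3,4) EFH_disj] .
  have u: "card (EU s) \<le> 1" "card (EW s) \<le> 1" using EU_le EW_le .
  have h: "card (EH s) \<le> 1" using EH_le1[OF assms(1)] .
  have fh: "card (EF s) + card (EH s) \<le> 3" using EFH_le3[OF assms(2)] cu by simp
  have B: "card (EU s) = 1 \<and> card (EW s) = 1 \<longrightarrow> card (EF s) + card (EH s) = 0"
    using both[OF assms(1)] cu by (metis card.empty card_0_eq fin(1,2) one_neq_zero)
  have O: "card (EH s) \<ge> 1 \<and> (card (EU s) = 1 \<or> card (EW s) = 1) \<longrightarrow> card (EF s) + card (EH s) \<le> 1"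
  proof
    assume a: "card (EH s) \<ge> 1 \<and> (card (EU s) = 1 \<or> card (EW s) = 1)"
    then have "EH s \<noteq> {}" "EU s \<noteq> {} \<or> EW s \<noteq> {}" by auto
    then show "card (EF s) + card (EH s) \<le> 1" using one[OF assms(1)] cu by simp
  qed
  show ?thesis using arith_aux[OF u h fh B O] .
qed

lemma EF_disj: assumes "s \<noteq> s'" shows "EF s \<inter> EF s' = {}"
proof (rule ccontr)
  assume "EF s \<inter> EF s' \<noteq> {}"
  then obtain e where e: "e \<in> EF s" "e \<in> EF s'" by blast
  from e(1) obtain a where a: "e = {Iv s a, Xv a}" unfolding EF_def by blast
  from e(2) obtain a' where a': "e = {Iv s' a', Xv a'}" unfolding EF_def by blast
  have "Iv s a \<in> {Iv s' a', Xv a'}" using a a' by simp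
  then show False using assms by simp
qed

lemma cover: assumes "e \<in> M" "Pv \<notin> e"
  shows "\<exists>s\<in>collC t S. e \<in> EU s \<union> EW s \<union> EF s \<union> EH s"
proof -
  have "e \<in> G_edges t S" using match assms(1) unfolding is_matching_def by blast
  then show ?thesis unfolding G_edges_def
  proof (elim UnE)
    assume "e \<in> {{Iv s a, Uv s} |s a. s \<in> collC t S \<and> a \<in> s}"
    then show ?thesis using assms by (auto simp: EU_def)
  next
    assume "e \<in> {{Iv s a, Wv s} |s a. s \<in> collC t S \<and> a \<in> s}"
    then show ?thesis using assms by (auto simp: EW_def)
  next
    assume "e \<in> {{Uv s, Wv s} |s. s \<in> collC t S}"
    then show ?thesis using assms by (auto simp: EU_def)
  next
    assume "e \<in> {{Uv s, U'v s} |s. s \<in> collC t S}"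
    then show ?thesis using assms by (auto simp: EU_def)
  next
    assume "e \<in> {{Wv s, W'v s} |s. s \<in> collC t S}"
    then show ?thesis using assms by (auto simp: EW_def)
  next
    assume "e \<in> {{Iv s a, Xv a} |s a. s \<in> collC t S \<and> a \<in> s}"
    then show ?thesis using assms by (auto simp: EF_def)
  next
    assume "e \<in> {{Pv, PIv i} |i. i \<in> {1..t}}"
    then show ?thesis using assms by auto
  next
    assume "e \<in> {{PIv i, Iv s a} |i s a. i \<in> {1..t} \<and> s \<in> collC t S - S i \<and> a \<in> s}"
    then show ?thesis using assms by (auto simp: EH_def)
  qed
qed

end

lemma card_Un_le4: "card (A \<union> B \<union> C \<union> D) \<le> card A + card B + card C + card D"
  using card_Un_le[of "A \<union> B \<union> C" D] card_Un_le[of "A \<union> B" C] card_Un_le[of A B] by linarith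

lemma Pv_edge: assumes "e \<in> G_edges t S" "Pv \<in> e" shows "\<exists>q\<in>{1..t}. e = {Pv, PIv q}"
  using assms(1) unfolding G_edges_def
proof (elim UnE)
qed (use assms(2) in auto)

theorem lemma15:
  fixes c t m :: nat and S :: "nat \<Rightarrow> nat set set" and M :: "vert set set"
  assumes three_sets: "\<forall>i\<in>{1..t}. \<forall>s\<in>S i. s \<subseteq> {1..3 * c} \<and> card s = 3"
    and same_size: "\<forall>i\<in>{1..t}. card (S i) = m"
    and distinct_inst: "\<forall>i\<in>{1..t}. \<forall>j\<in>{1..t}. i \<noteq> j \<longrightarrow> S i \<noteq> S j"
    and acyc: "acyclic_matching (G_edges t S) M"
    and size: "card M \<ge> ell c t S"
  shows "saturates M Pv \<and> (\<exists>q\<in>{1..t}. {Pv, PIv q} \<in> M)"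
proof -
  have ell_eq: "ell c t S = 2 * card (collC t S) + 2 * c + 1"
  proof -
    have "2 * (3 * c) div 3 = 2 * c" by simp
    then show ?thesis unfolding ell_def by simp
  qed
  have finM: "finite M"
  proof (rule ccontr)
    assume "infinite M" then have "card M = 0" by simp
    then show False using size ell_eq by simp
  qed
  have match: "is_matching (G_edges t S) M"
    and nocyc: "\<not> has_cycle (induced_edges (G_edges t S) (\<Union>M))"
    using acyc unfolding acyclic_matching_def by auto
  interpret ctx t S M by (rule ctx.intro[OF match nocyc finM])
  let ?C = "collC t S"
  have Cprop: "card s = 3 \<and> s \<subseteq> {1..3*c}" if "s \<in> ?C" for s
    using three_sets that unfolding collC_def by blast
  have finC: "finite ?C"
    by (rule finite_subset[of _ "Pow {1..3*c}"]) (use Cprop in auto)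
  have sat: "saturates M Pv"
  proof (rule ccontr)
    assume "\<not> saturates M Pv"
    then have nP: "\<forall>e\<in>M. Pv \<notin> e" unfolding saturates_def by blast
    let ?A = "\<lambda>s. EU s \<union> EW s \<union> EF s \<union> EH s"
    have sub: "M \<subseteq> (\<Union>s\<in>?C. ?A s)"
    proof
      fix e assume e: "e \<in> M"
      then obtain s where "s \<in> ?C" "e \<in> ?A s" using cover nP by meson
      then show "e \<in> (\<Union>s\<in>?C. ?A s)" by (rule UN_I)
    qed
    have "card M \<le> card (\<Union>s\<in>?C. ?A s)"
      by (rule card_mono[OF _ sub]) (use finC fin in auto)
    also have "\<dots> \<le> (\<Sum>s\<in>?C. card (?A s))" by (rule card_UN_le[OF finC])
    also have "\<dots> \<le> (\<Sum>s\<in>?C. card (EU s) + card (EW s) + card (EF s) + card (EH s))"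
      by (rule sum_mono) (rule card_Un_le4)
    finally have c1: "card M \<le> (\<Sum>s\<in>?C. card (EU s) + card (EW s) + card (EF s) + card (EH s))" .
    have "3 * card M \<le> 3 * (\<Sum>s\<in>?C. card (EU s) + card (EW s) + card (EF s) + card (EH s))"
      using c1 by (rule mult_le_mono2)
    also have "\<dots> = (\<Sum>s\<in>?C. 3 * (card (EU s) + card (EW s) + card (EF s) + card (EH s)))"
      by (rule sum_distrib_left)
    also have "\<dots> \<le> (\<Sum>s\<in>?C. 6 + 2 * card (EF s))"
    proof (rule sum_mono)
      fix s assume s: "s \<in> ?C"
      show "3 * (card (EU s) + card (EW s) + card (EF s) + card (EH s)) \<le> 6 + 2 * card (EF s)"
        using gadget[OF s conjunct1[OF Cprop[OF s]]] .
    qed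
    also have "\<dots> = 6 * card ?C + 2 * (\<Sum>s\<in>?C. card (EF s))"
      by (simp add: sum.distrib sum_distrib_left)
    finally have c2: "3 * card M \<le> 6 * card ?C + 2 * (\<Sum>s\<in>?C. card (EF s))" .
    have disj: "\<forall>s\<in>?C. \<forall>s'\<in>?C. s \<noteq> s' \<longrightarrow> EF s \<inter> EF s' = {}"
      using EF_disj by blast
    have c3: "(\<Sum>s\<in>?C. card (EF s)) = card (\<Union>s\<in>?C. EF s)"
      by (rule card_UN_disjoint[symmetric, OF finC _ disj]) (use fin in blast)
    have "card (\<Union>s\<in>?C. EF s) \<le> card (Xv ` {1..3*c})"
    proof (rule match_card_le[OF match])
      show "(\<Union>s\<in>?C. EF s) \<subseteq> M" by (auto simp: EF_def)
      show "finite (Xv ` {1..3*c})" by simp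
      show "\<forall>e\<in>\<Union>s\<in>?C. EF s. \<exists>v\<in>Xv ` {1..3*c}. v \<in> e"
      proof
        fix e assume "e \<in> (\<Union>s\<in>?C. EF s)"
        then obtain s a where "s \<in> ?C" "a \<in> s" "e = {Iv s a, Xv a}" by (auto simp: EF_def)
        then show "\<exists>v\<in>Xv ` {1..3*c}. v \<in> e" using Cprop by blast
      qed
    qed
    also have "\<dots> \<le> card {1..3*c}" by (rule card_image_le) simp
    finally have c4: "card (\<Union>s\<in>?C. EF s) \<le> 3 * c" by simp
    from c2 c3 c4 size ell_eq show False by linarith
  qed
  then obtain e where e: "e \<in> M" "Pv \<in> e" unfolding saturates_def by blast
  have "e \<in> G_edges t S" using match e(1) unfolding is_matching_def by blast
  then obtain q where "q \<in> {1..t}" "e = {Pv, PIv q}" using Pv_edge e(2) by blast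
  then show ?thesis using sat e(1) by blast
qed

end
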